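(* Fix $m\ge1$ and $n\ge0$. Every labelled sequent derivable in $\mathsf{Ldm}_{n}^{m}\mathsf{L}$ is valid.
   Context: Language. $Ag=\{1,\dots,m\}$, $Var$ a countable set of propositional variables; formulas of $\mathcal{L}^m$: $\phi ::= p \mid \overline{p} \mid (\phi\wedge\phi) \mid (\phi\vee\phi) \mid \Box\phi \mid \Diamond\phi \mid [i]\phi \mid \langle i\rangle\phi$. Models. An $\mathsf{Ldm}_{n}^{m}$-frame is $(W,\{\mathcal{R}_i\}_{i\in Ag})$ with $W\neq\emptyset$ and: (C1) each $\mathcal{R}_i$ is an equivalence relation on $W$; (C2) for all $u_1,\dots,u_m\in W$, $\bigcap_{i\in Ag}\mathcal{R}_i(u_i)\neq\emptyset$, where $\mathcal{R}_i(w)=\{v:(w,v)\in\mathcal{R}_i\}$; (C3) only if $n>0$: for each $i$ and all $w_0,\dots,w_n\in W$ there are $0\le k<j\le n$ with $(w_k,w_j)\in\mathcal{R}_i$. A model adds $V:Var\to\mathcal{P}(W)$. Satisfaction: $w\Vdash p$ iff $w\in V(p)$; $w\Vdash\overline{p}$ iff $w\notin V(p)$; $\wedge,\vee$ as usual; $\Box,\Diamond$ quantify over all of $W$; $[i],\langle i\rangle$ quantify (universally, existentially) over $\mathcal{R}_i(w)$. Labelled sequents $\mathcal{R},\Gamma$: $\mathcal{R}$ a multiset of relational atoms $\mathcal{R}_ixy$, $\Gamma$ a multiset of labelled formulas $x:\phi$. Given a model $M$ with domain $W$ and an interpretation $I$ mapping labels to worlds, $\mathcal{R},\Gamma$ is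 satisfied in $M$ under $I$ iff, if $(x^I,y^I)\in\mathcal{R}_i$ holds for all relational atoms $\mathcal{R}_ixy\in\mathcal{R}$, then $M,z^I\Vdash\phi$ for some $z:\phi\in\Gamma$. A sequent is valid iff it is satisfied in every $\mathsf{Ldm}_{n}^{m}$-model under every interpretation. Rules of $\mathsf{Ldm}_{n}^{m}\mathsf{L}$ (premise(s) / conclusion): $(\mathsf{id})$: / $\mathcal{R}, w:p, w:\overline{p},\Gamma$. $(\wedge)$: $\mathcal{R}, w:\phi\wedge\psi, w:\phi,\Gamma$ and $\mathcal{R}, w:\phi\wedge\psi, w:\psi,\Gamma$ / $\mathcal{R}, w:\phi\wedge\psi,\Gamma$. $(\vee)$: $\mathcal{R}, w:\phi\vee\psi, w:\phi, w:\psi,\Gamma$ / $\mathcal{R}, w:\phi\vee\psi,\Gamma$. $(\Box)$: $\mathcal{R}, w:\Box\phi, v:\phi,\Gamma$ / $\mathcal{R}, w:\Box\phi,\Gamma$ ($v$ fresh). $(\Diamond)$: $\mathcal{R}, w:\Diamond\phi, u:\phi,\Gamma$ / $\mathcal{R}, w:\Diamond\phi,\Gamma$. $(\mathsf{IOA})$: $\mathcal{R},\mathcal{R}_1u_1v,\dots,\mathcal{R}_mu_mv,\Gamma$ / $\mathcal{R},\Gamma$ ($v$ fresh). $([i])$: $\mathcal{R},\mathcal{R}_iwv, w:[i]\phi, v:\phi,\Gamma$ / $\mathcal{R}, w:[i]\phi,\Gamma$ ($v$ fresh). $(\mathsf{Pr}_i)$: $\mathcal{R}, w:\langle i\rangle\phi,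 u:\phi,\Gamma$ / $\mathcal{R}, w:\langle i\rangle\phi,\Gamma$, applicable only if $w=u$ or there are labels $w=z_0,\dots,z_k=u$ ($k\ge1$) with $\mathcal{R}_iz_lz_{l+1}\in\mathcal{R}$ or $\mathcal{R}_iz_{l+1}z_l\in\mathcal{R}$ for each $l<k$. $(\mathsf{APC}^i_n)$ (only if $n>0$): premises $\mathcal{R},\mathcal{R}_iw_kw_j,\Gamma$ for all $0\le k\le n-1$, $k+1\le j\le n$ / $\mathcal{R},\Gamma$. "Fresh" means not occurring in the conclusion. One copy of $([i])$, $(\mathsf{Pr}_i)$, $(\mathsf{APC}^i_n)$ for each $i\in Ag$. *)

theory Defs
  imports Main "HOL-Library.Multiset" "HOL-Library.Countable"
begin

text \<open>Formulas of L^m (negation normal form). Agents are natural numbers;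
  the agent set is Ag = {1..m}.\<close>

datatype 'v fm =
    Atom 'v
  | NAtom 'v
  | And "'v fm" "'v fm"
  | Or "'v fm" "'v fm"
  | Box "'v fm"
  | Dia "'v fm"
  | Stit nat "'v fm"
  | CStit nat "'v fm"

definition ldm_frame :: "nat \<Rightarrow> nat \<Rightarrow> 'w set \<Rightarrow> (nat \<Rightarrow> ('w \<times> 'w) set) \<Rightarrow> bool" where
  "ldm_frame m n W R \<longleftrightarrow>
     W \<noteq> {} \<and>
     (\<forall>i\<in>{1..m}. equiv W (R i)) \<and>
     (\<forall>u. (\<forall>i\<in>{1..m}. u i \<in> W) \<longrightarrow> (\<Inter>i\<in>{1..m}. R i `` {u i}) \<noteq> {}) \<and>
     (n > 0 \<longrightarrow> (\<forall>i\<in>{1..m}. \<forall>w. (\<forall>k\<le>n. w k \<in> W) \<longrightarrow>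
          (\<exists>k j. k < j \<and> j \<le> n \<and> (w k, w j) \<in> R i)))"

fun sat :: "'w set \<Rightarrow> (nat \<Rightarrow> ('w \<times> 'w) set) \<Rightarrow> ('v \<Rightarrow> 'w set) \<Rightarrow> 'w \<Rightarrow> 'v fm \<Rightarrow> bool" where
  "sat W R V w (Atom p) = (w \<in> V p)"
| "sat W R V w (NAtom p) = (w \<notin> V p)"
| "sat W R V w (And \<phi> \<psi>) = (sat W R V w \<phi> \<and> sat W R V w \<psi>)"
| "sat W R V w (Or \<phi> \<psi>) = (sat W R V w \<phi> \<or> sat W R V w \<psi>)"
| "sat W R V w (Box \<phi>) = (\<forall>v\<in>W. sat W R V v \<phi>)"
| "sat W R V w (Dia \<phi>) = (\<exists>v\<in>W. sat W R V v \<phi>)"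
| "sat W R V w (Stit i \<phi>) = (\<forall>v\<in>R i `` {w}. sat W R V v \<phi>)"
| "sat W R V w (CStit i \<phi>) = (\<exists>v\<in>R i `` {w}. sat W R V v \<phi>)"

text \<open>Labelled sequents: labels are nat; a relational atom R_i x y is (i, x, y).\<close>

type_synonym ratom = "nat \<times> nat \<times> nat"
type_synonym 'v lfm = "nat \<times> 'v fm"

definition seq_sat :: "'w set \<Rightarrow> (nat \<Rightarrow> ('w \<times> 'w) set) \<Rightarrow> ('v \<Rightarrow> 'w set) \<Rightarrow> (nat \<Rightarrow> 'w)
    \<Rightarrow> ratom multiset \<Rightarrow> 'v lfm multiset \<Rightarrow> bool" where
  "seq_sat W R V I Rs \<Gamma> \<longleftrightarrow>
     ((\<forall>(i, x, y) \<in> set_mset Rs. (I x, I y) \<in> R i) \<longrightarrow>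
      (\<exists>(z, \<phi>) \<in> set_mset \<Gamma>. sat W R V (I z) \<phi>))"

definition labels :: "ratom multiset \<Rightarrow> 'v lfm multiset \<Rightarrow> nat set" where
  "labels Rs \<Gamma> = (\<Union>(i, x, y) \<in> set_mset Rs. {x, y}) \<union> fst ` set_mset \<Gamma>"

definition connected :: "nat \<Rightarrow> ratom multiset \<Rightarrow> nat \<Rightarrow> nat \<Rightarrow> bool" where
  "connected i Rs w u \<longleftrightarrow>
     (w, u) \<in> ({(x, y). (i, x, y) \<in># Rs} \<union> {(y, x). (i, x, y) \<in># Rs})\<^sup>*"

inductive derivable :: "nat \<Rightarrow> nat \<Rightarrow> ratom multiset \<Rightarrow> 'v lfm multiset \<Rightarrow> bool"
  for m n :: nat where
  ax_id: "derivable m n Rs (add_mset (w, Atom p) (add_mset (w, NAtom p) \<Gamma>))"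
| r_and: "derivable m n Rs (add_mset (w, And \<phi> \<psi>) (add_mset (w, \<phi>) \<Gamma>)) \<Longrightarrow>
          derivable m n Rs (add_mset (w, And \<phi> \<psi>) (add_mset (w, \<psi>) \<Gamma>)) \<Longrightarrow>
          derivable m n Rs (add_mset (w, And \<phi> \<psi>) \<Gamma>)"
| r_or: "derivable m n Rs (add_mset (w, Or \<phi> \<psi>) (add_mset (w, \<phi>) (add_mset (w, \<psi>) \<Gamma>))) \<Longrightarrow>
         derivable m n Rs (add_mset (w, Or \<phi> \<psi>) \<Gamma>)"
| r_box: "v \<notin> labels Rs (add_mset (w, Box \<phi>) \<Gamma>) \<Longrightarrow>
          derivable m n Rs (add_mset (w, Box \<phi>) (add_mset (v, \<phi>) \<Gamma>)) \<Longrightarrow>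
          derivable m n Rs (add_mset (w, Box \<phi>) \<Gamma>)"
| r_dia: "derivable m n Rs (add_mset (w, Dia \<phi>) (add_mset (u, \<phi>) \<Gamma>)) \<Longrightarrow>
          derivable m n Rs (add_mset (w, Dia \<phi>) \<Gamma>)"
| r_ioa: "v \<notin> labels Rs \<Gamma> \<Longrightarrow>
          derivable m n (Rs + mset (map (\<lambda>i. (i, u i, v)) [1..<Suc m])) \<Gamma> \<Longrightarrow>
          derivable m n Rs \<Gamma>"
| r_stit: "i \<in> {1..m} \<Longrightarrow> v \<notin> labels Rs (add_mset (w, Stit i \<phi>) \<Gamma>) \<Longrightarrow>
           derivable m n (add_mset (i, w, v) Rs) (add_mset (w, Stit i \<phi>) (add_mset (v, \<phi>) \<Gamma>)) \<Longrightarrow>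
           derivable m n Rs (add_mset (w, Stit i \<phi>) \<Gamma>)"
| r_pr: "i \<in> {1..m} \<Longrightarrow> connected i Rs w u \<Longrightarrow>
         derivable m n Rs (add_mset (w, CStit i \<phi>) (add_mset (u, \<phi>) \<Gamma>)) \<Longrightarrow>
         derivable m n Rs (add_mset (w, CStit i \<phi>) \<Gamma>)"
| r_apc: "n > 0 \<Longrightarrow> i \<in> {1..m} \<Longrightarrow>
          (\<And>k j. k < j \<Longrightarrow> j \<le> n \<Longrightarrow> derivable m n (add_mset (i, ws k, ws j) Rs) \<Gamma>) \<Longrightarrow>
          derivable m n Rs \<Gamma>"

end

theory Submission
  imports Defs
begin

lemma seq_sat_upd:
  assumes "v \<notin> labels Rs \<Gamma>"
  shows "seq_sat W R V (I(v:=x)) Rs \<Gamma> = seq_sat W R V I Rs \<Gamma>"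
proof -
  have a: "\<forall>(i, a, b) \<in> set_mset Rs. a \<noteq> v \<and> b \<noteq> v" using assms unfolding labels_def by auto
  have g: "\<forall>(z, \<phi>) \<in> set_mset \<Gamma>. z \<noteq> v" using assms unfolding labels_def by force
  have 1: "(\<forall>(i, a, b) \<in> set_mset Rs. ((I(v:=x)) a, (I(v:=x)) b) \<in> R i) = (\<forall>(i, a, b) \<in> set_mset Rs. (I a, I b) \<in> R i)"
    using a by fastforce
  have 2: "(\<exists>(z, \<phi>) \<in> set_mset \<Gamma>. sat W R V ((I(v:=x)) z) \<phi>) = (\<exists>(z, \<phi>) \<in> set_mset \<Gamma>. sat W R V (I z) \<phi>)"
    using g by fastforce
  show ?thesis unfolding seq_sat_def 1 2 ..
qed

lemma conn_R:
  assumes "equiv W (R i)" "\<forall>(j, a, b) \<in> set_mset Rs. (I a, I b) \<in> R j" "connected i Rs w u"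
    "I w \<in> W"
  shows "(I w, I u) \<in> R i"
proof -
  have "(w, u) \<in> ({(x, y). (i, x, y) \<in># Rs} \<union> {(y, x). (i, x, y) \<in># Rs})\<^sup>*"
    using assms(3) unfolding connected_def .
  then show ?thesis
  proof (induction rule: rtrancl_induct)
    case base then show ?case using assms(1,4) unfolding equiv_def refl_on_def by auto
  next
    case (step y z)
    have yz: "(I y, I z) \<in> R i" using step.hyps(2) assms(1,2)
      unfolding equiv_def sym_def by fastforce
    show ?case using step.IH yz assms(1) unfolding equiv_def trans_def by blast
  qed
qed

lemma frame_equiv: "ldm_frame m n W R \<Longrightarrow> i \<in> {1..m} \<Longrightarrow> equiv W (R i)"
  unfolding ldm_frame_def by blast

lemma frame_C2: "ldm_frame m n W R \<Longrightarrow> (\<forall>i\<in>{1..m}. u i \<in> W) \<Longrightarrow> (\<Inter>i\<in>{1..m}. R i `` {u i}) \<noteq> {}"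
  unfolding ldm_frame_def by blast

lemma frame_C3: "ldm_frame m n W R \<Longrightarrow> n > 0 \<Longrightarrow> i \<in> {1..m} \<Longrightarrow> (\<forall>k\<le>n. w k \<in> W) \<Longrightarrow>
   \<exists>k j. k < j \<and> j \<le> n \<and> (w k, w j) \<in> R i"
  unfolding ldm_frame_def by blast

lemma sound:
  assumes "derivable m n Rs \<Gamma>" "m \<ge> 1" "ldm_frame m n W R"
  shows "\<forall>x. I x \<in> W \<Longrightarrow> seq_sat W R V I Rs \<Gamma>"
  using assms(1)
proof (induction arbitrary: I rule: derivable.induct)
  case (ax_id Rs w p \<Gamma>)
  then show ?case unfolding seq_sat_def by (cases "I w \<in> V p") force+
next
  case (r_and Rs w \<phi> \<psi> \<Gamma>)
  then show ?case unfolding seq_sat_def by fastforce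
next
  case (r_or Rs w \<phi> \<psi> \<Gamma>)
  then show ?case unfolding seq_sat_def by fastforce
next
  case (r_dia Rs w \<phi> u \<Gamma>)
  then show ?case unfolding seq_sat_def by fastforce
next
  case (r_box v Rs w \<phi> \<Gamma>)
  show ?case
  proof (rule ccontr)
    assume ns: "\<not> seq_sat W R V I Rs (add_mset (w, Box \<phi>) \<Gamma>)"
    then obtain x where x: "x \<in> W" "\<not> sat W R V x \<phi>" unfolding seq_sat_def by auto
    have vw: "v \<noteq> w" using r_box.hyps(1) unfolding labels_def by auto
    have ns': "\<not> seq_sat W R V (I(v:=x)) Rs (add_mset (w, Box \<phi>) \<Gamma>)"
      by (subst seq_sat_upd[OF r_box.hyps(1)]) (rule ns)
    have "seq_sat W R V (I(v:=x)) Rs (add_mset (w, Box \<phi>) (add_mset (v, \<phi>) \<Gamma>))"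
      using r_box.IH r_box.prems x by auto
    then show False using ns' x vw unfolding seq_sat_def by auto
  qed
next
  case (r_stit i v Rs w \<phi> \<Gamma>)
  show ?case
  proof (rule ccontr)
    assume ns: "\<not> seq_sat W R V I Rs (add_mset (w, Stit i \<phi>) \<Gamma>)"
    then obtain x where x: "(I w, x) \<in> R i" "\<not> sat W R V x \<phi>" unfolding seq_sat_def by auto
    have eq: "equiv W (R i)" using frame_equiv[OF assms(3) r_stit.hyps(1)] .
    then have xW: "x \<in> W" using x(1) unfolding equiv_def refl_on_def by auto
    have vw: "v \<noteq> w" using r_stit.hyps(2) unfolding labels_def by auto
    have ns': "\<not> seq_sat W R V (I(v:=x)) Rs (add_mset (w, Stit i \<phi>) \<Gamma>)"
      by (subst seq_sat_upd[OF r_stit.hyps(2)]) (rule ns)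
    have "seq_sat W R V (I(v:=x)) (add_mset (i, w, v) Rs) (add_mset (w, Stit i \<phi>) (add_mset (v, \<phi>) \<Gamma>))"
      using r_stit.IH r_stit.prems xW by auto
    then show False using ns' x vw unfolding seq_sat_def by auto
  qed
next
  case (r_ioa v Rs \<Gamma> u)
  show ?case
  proof (rule ccontr)
    assume ns: "\<not> seq_sat W R V I Rs \<Gamma>"
    have "(\<Inter>i\<in>{1..m}. R i `` {I (u i)}) \<noteq> {}"
      using frame_C2[OF assms(3), of "\<lambda>i. I (u i)"] r_ioa.prems by blast
    then obtain x where x: "\<And>i. i \<in> {1..m} \<Longrightarrow> (I (u i), x) \<in> R i" by blast
    have eq: "\<And>i. i \<in> {1..m} \<Longrightarrow> equiv W (R i)" using frame_equiv[OF assms(3)] by blast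
    have xW: "x \<in> W" using x[of 1] eq[of 1] assms(2) unfolding equiv_def refl_on_def by auto
    have ns': "\<not> seq_sat W R V (I(v:=x)) Rs \<Gamma>"
      by (subst seq_sat_upd[OF r_ioa.hyps(1)]) (rule ns)
    have new: "((I(v:=x)) (u i), (I(v:=x)) v) \<in> R i" if "i \<in> {1..m}" for i
    proof (cases "u i = v")
      case True then show ?thesis using eq[OF that] xW unfolding equiv_def refl_on_def by auto
    next
      case False then show ?thesis using x[OF that] by auto
    qed
    have "seq_sat W R V (I(v:=x)) (Rs + mset (map (\<lambda>i. (i, u i, v)) [1..<Suc m])) \<Gamma>"
      using r_ioa.IH r_ioa.prems xW by auto
    then show False using ns' new unfolding seq_sat_def by fastforce
  qed
next
  case (r_pr i Rs w u \<phi> \<Gamma>)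
  have eq: "equiv W (R i)" using frame_equiv[OF assms(3) r_pr.hyps(1)] .
  have s: "seq_sat W R V I Rs (add_mset (w, CStit i \<phi>) (add_mset (u, \<phi>) \<Gamma>))"
    using r_pr.IH r_pr.prems by auto
  show ?case unfolding seq_sat_def
  proof
    assume A: "\<forall>(j, a, b) \<in> set_mset Rs. (I a, I b) \<in> R j"
    have wu: "(I w, I u) \<in> R i" using conn_R[of W R i Rs I w u] eq A r_pr.hyps(2) r_pr.prems by blast
    have "\<exists>(z, \<psi>) \<in> set_mset (add_mset (w, CStit i \<phi>) (add_mset (u, \<phi>) \<Gamma>)). sat W R V (I z) \<psi>"
      using s A unfolding seq_sat_def by blast
    then have "sat W R V (I w) (CStit i \<phi>) \<or> sat W R V (I u) \<phi> \<or> (\<exists>(z, \<psi>) \<in> set_mset \<Gamma>. sat W R V (I z) \<psi>)"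
      by auto
    then show "\<exists>(z, \<psi>) \<in> set_mset (add_mset (w, CStit i \<phi>) \<Gamma>). sat W R V (I z) \<psi>"
      using wu by auto
  qed
next
  case (r_apc i ws Rs \<Gamma>)
  have "\<forall>k\<le>n. I (ws k) \<in> W" using r_apc.prems by auto
  then obtain k j where kj: "k < j" "j \<le> n" "(I (ws k), I (ws j)) \<in> R i"
    using frame_C3[OF assms(3) r_apc.hyps(1,2), of "\<lambda>k. I (ws k)"] by blast
  have "seq_sat W R V I (add_mset (i, ws k, ws j) Rs) \<Gamma>"
    using r_apc.IH[OF kj(1,2)] r_apc.prems by auto
  then show ?case using kj(3) unfolding seq_sat_def by auto
qed

theorem theorem4:
  fixes m n :: nat
    and Rs :: "ratom multiset" and \<Gamma> :: "('v::countable) lfm multiset"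
    and W :: "'w set" and R :: "nat \<Rightarrow> ('w \<times> 'w) set"
    and V :: "'v \<Rightarrow> 'w set" and I :: "nat \<Rightarrow> 'w"
  assumes "m \<ge> 1"
    and "derivable m n Rs \<Gamma>"
    and "ldm_frame m n W R"
    and "\<forall>x. I x \<in> W"
  shows "seq_sat W R V I Rs \<Gamma>"
  using sound[OF assms(2,1,3) assms(4)] .

end
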